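(* For each $n$ let $N_n=(N_{n,1},\ldots,N_{n,M_n})$ be multinomially distributed with parameters $(n,p_{n,1},\ldots,p_{n,M_n})$, where $\max_m p_{n,m}\to0$ as $n\to\infty$ and $\liminf_{n\to\infty}n\min_m p_{n,m}>0$. For given real numbers $\alpha_{n,m}$ let $$s_n^2=\frac2{n^2}\sum_m\frac{\alpha_{n,m}^2}{p_{n,m}^2}+\frac4n\sum_m p_{n,m}\Big(\frac{\alpha_{n,m}}{p_{n,m}}-\sum_{m'}\alpha_{n,m'}\Big)^2 .$$ Then $$\sum_m\alpha_{n,m}\Big(\frac{N_{n,m}(N_{n,m}-1)}{n(n-1)p_{n,m}^2}-1\Big)=O_P\Big(s_n+\frac{\sum_m|\alpha_{n,m}|}{\sqrt n}\Big).$$ *)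

theory Defs
  imports "HOL-Probability.Probability"
begin

definition categorical_pmf :: "nat \<Rightarrow> (nat \<Rightarrow> real) \<Rightarrow> nat pmf" where
  "categorical_pmf M p = embed_pmf (\<lambda>m. if m < M then p m else 0)"

primrec multinomial_pmf :: "nat \<Rightarrow> nat \<Rightarrow> (nat \<Rightarrow> real) \<Rightarrow> (nat \<Rightarrow> nat) pmf" where
  "multinomial_pmf 0 M p = return_pmf (\<lambda>_. 0)"
| "multinomial_pmf (Suc n) M p =
     bind_pmf (multinomial_pmf n M p) (\<lambda>N.
       map_pmf (\<lambda>m. N(m := Suc (N m))) (categorical_pmf M p))"

definition bigO_P :: "(nat \<Rightarrow> 'a pmf) \<Rightarrow> (nat \<Rightarrow> 'a \<Rightarrow> real) \<Rightarrow> (nat \<Rightarrow> real) \<Rightarrow> bool" where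
  "bigO_P D X r \<longleftrightarrow> (\<forall>\<epsilon>>0. \<exists>C. \<forall>\<^sub>F n in sequentially.
      measure_pmf.prob (D n) {x. \<bar>X n x\<bar> > C * r n} < \<epsilon>)"

end

theory Submission
  imports Defs
begin

lemma pmf_categorical:
  assumes nn: "\<And>m. m < M \<Longrightarrow> p m \<ge> 0" and s: "(\<Sum>m<M. p m) = 1"
  shows "pmf (categorical_pmf M p) x = (if x < M then p x else 0)"
  unfolding categorical_pmf_def
proof (rule pmf_embed_pmf)
  show "\<And>x. 0 \<le> (if x < M then p x else 0)" using nn by auto
  have "(\<integral>\<^sup>+x. ennreal (if x < M then p x else 0) \<partial>count_space UNIV)
      = (\<Sum>x\<in>{..<M}. ennreal (if x < M then p x else 0))"
    by (rule nn_integral_count_space') auto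
  also have "\<dots> = ennreal (\<Sum>x<M. p x)"
    using nn by (subst sum_ennreal) auto
  finally show "(\<integral>\<^sup>+x. ennreal (if x < M then p x else 0) \<partial>count_space UNIV) = 1"
    using s by simp
qed

lemma set_categorical:
  assumes nn: "\<And>m. m < M \<Longrightarrow> p m \<ge> 0" and s: "(\<Sum>m<M. p m) = 1"
  shows "set_pmf (categorical_pmf M p) \<subseteq> {..<M}"
  using pmf_categorical[OF assms] by (auto simp: set_pmf_eq)

lemma expectation_categorical:
  fixes h :: "nat \<Rightarrow> real"
  assumes nn: "\<And>m. m < M \<Longrightarrow> p m \<ge> 0" and s: "(\<Sum>m<M. p m) = 1"
  shows "measure_pmf.expectation (categorical_pmf M p) h = (\<Sum>m<M. p m * h m)"
  apply (subst integral_measure_pmf_real[of "{..<M}"])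
  using set_categorical[OF assms] pmf_categorical[OF assms] by (auto simp: mult.commute)

lemma finite_multinomial:
  assumes nn: "\<And>m. m < M \<Longrightarrow> p m \<ge> 0" and s: "(\<Sum>m<M. p m) = 1"
  shows "finite (set_pmf (multinomial_pmf n M p))"
proof (induction n)
  case 0 then show ?case by simp
next
  case (Suc n)
  have "finite (set_pmf (categorical_pmf M p))"
    using set_categorical[OF assms] finite_subset by blast
  with Suc show ?case by (simp add: set_bind_pmf)
qed

lemma expectation_multinomial_Suc:
  fixes h :: "(nat \<Rightarrow> nat) \<Rightarrow> real"
  assumes nn: "\<And>m. m < M \<Longrightarrow> p m \<ge> 0" and s: "(\<Sum>m<M. p m) = 1"
  shows "measure_pmf.expectation (multinomial_pmf (Suc n) M p) h
    = measure_pmf.expectation (multinomial_pmf n M p) (\<lambda>N. \<Sum>m<M. p m * h (N(m := Suc (N m))))"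
proof -
  let ?A = "set_pmf (multinomial_pmf n M p)"
  have fA: "finite ?A" by (rule finite_multinomial[OF assms])
  have fc: "finite (set_pmf (categorical_pmf M p))"
    using set_categorical[OF assms] finite_subset by blast
  have "measure_pmf.expectation (multinomial_pmf (Suc n) M p) h
     = (\<Sum>a\<in>?A. pmf (multinomial_pmf n M p) a *\<^sub>R measure_pmf.expectation
          (map_pmf (\<lambda>m. a(m := Suc (a m))) (categorical_pmf M p)) h)"
    by (simp only: multinomial_pmf.simps, rule pmf_expectation_bind[OF fA]) (use fc in auto)
  also have "\<dots> = (\<Sum>a\<in>?A. (\<Sum>m<M. p m * h (a(m := Suc (a m)))) * pmf (multinomial_pmf n M p) a)"
    by (simp add: expectation_categorical[OF assms] mult.commute)
  also have "\<dots> = measure_pmf.expectation (multinomial_pmf n M p) (\<lambda>N. \<Sum>m<M. p m * h (N(m := Suc (N m))))"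
    by (rule integral_measure_pmf_real[symmetric, OF fA]) auto
  finally show ?thesis .
qed

definition ff :: "real \<Rightarrow> nat \<Rightarrow> real" where
  "ff x c = (\<Prod>i<c. (x - real i))"

lemma ff_0[simp]: "ff x 0 = 1" by (simp add: ff_def)
lemma ff_Suc: "ff x (Suc c) = ff x c * (x - real c)" by (simp add: ff_def)
lemma ff_zero: "ff 0 c = (if c = 0 then 1 else 0)"
  by (cases c) (auto simp: ff_def prod_zero_iff)

lemma ff_shift: "ff (x + 1) c = ff x c + real c * ff x (c - 1)"
proof (induction c)
  case 0 then show ?case by simp
next
  case (Suc c)
  show ?case
  proof (cases c)
    case 0 then show ?thesis by (simp add: ff_Suc)
  next
    case (Suc d)
    have "ff (x+1) (Suc c) = (ff x c + real c * ff x d) * (x + 1 - real c)"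
      using Suc.IH Suc by (simp add: ff_Suc)
    also have "\<dots> = ff x c * (x - real c) + ff x c + real c * (ff x d * (x - real d))"
      using Suc by (simp add: algebra_simps)
    also have "\<dots> = ff x (Suc c) + real (Suc c) * ff x c"
      using Suc by (simp add: ff_Suc algebra_simps)
    finally show ?thesis by simp
  qed
qed

lemma fmoment:
  assumes nn: "\<And>m. m < M \<Longrightarrow> p m \<ge> 0" and s: "(\<Sum>m<M. p m) = 1"
    and mM: "m < M" and kM: "k < M \<or> b = 0" and mk: "m \<noteq> k"
  shows "measure_pmf.expectation (multinomial_pmf n M p) (\<lambda>N. ff (real (N m)) a * ff (real (N k)) b)
     = ff (real n) (a + b) * p m ^ a * p k ^ b"
  using kM
proof (induction n arbitrary: a b)
  case 0 then show ?case by (simp add: ff_zero)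
next
  case (Suc n)
  define h where "h = (\<lambda>N::nat\<Rightarrow>nat. ff (real (N m)) a * ff (real (N k)) b)"
  define D1 where "D1 = (\<lambda>N::nat\<Rightarrow>nat. real a * ff (real (N m)) (a - 1) * ff (real (N k)) b)"
  define D2 where "D2 = (\<lambda>N::nat\<Rightarrow>nat. real b * ff (real (N m)) a * ff (real (N k)) (b - 1))"
  have pw: "(\<Sum>j<M. p j * h (N(j := Suc (N j)))) = h N + p m * D1 N + p k * D2 N" for N
  proof -
    have g: "h (N(j := Suc (N j))) = h N + (if j = m then D1 N else 0) + (if j = k then D2 N else 0)" for j
      using ff_shift[of "real (N m)" a] ff_shift[of "real (N k)" b] mk
      by (auto simp: h_def D1_def D2_def algebra_simps)
    have "(\<Sum>j<M. p j * h (N(j := Suc (N j)))) = (\<Sum>j<M. p j * h N + (if j = m then p j * D1 N else 0)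
        + (if j = k then p j * D2 N else 0))"
      by (intro sum.cong refl) (simp add: g algebra_simps)
    also have "\<dots> = h N + p m * D1 N + (if k < M then p k * D2 N else 0)"
      using mM s by (simp add: sum.distrib sum_distrib_right[symmetric])
    also have "\<dots> = h N + p m * D1 N + p k * D2 N"
      using Suc.prems by (auto simp: D2_def)
    finally show ?thesis .
  qed
  have fin: "finite (set_pmf (multinomial_pmf n M p))" by (rule finite_multinomial[OF nn s])
  note int = integrable_measure_pmf_finite[OF fin]
  have "measure_pmf.expectation (multinomial_pmf (Suc n) M p) h
      = measure_pmf.expectation (multinomial_pmf n M p) (\<lambda>N. h N + p m * D1 N + p k * D2 N)"
    using expectation_multinomial_Suc[of M p n h, OF nn s] pw by presburger
  also have "\<dots> = measure_pmf.expectation (multinomial_pmf n M p) h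
      + p m * measure_pmf.expectation (multinomial_pmf n M p) D1
      + p k * measure_pmf.expectation (multinomial_pmf n M p) D2"
    by (simp add: int)
  also have "measure_pmf.expectation (multinomial_pmf n M p) D1
      = real a * (ff (real n) (a - 1 + b) * p m ^ (a - 1) * p k ^ b)"
    unfolding D1_def using Suc.IH[of b "a - 1"] Suc.prems by (simp add: mult.assoc)
  also have "measure_pmf.expectation (multinomial_pmf n M p) D2
      = real b * (ff (real n) (a + (b - 1)) * p m ^ a * p k ^ (b - 1))"
    unfolding D2_def using Suc.IH[of "b - 1" a] Suc.prems
    by (auto simp add: mult.assoc)
  also have "measure_pmf.expectation (multinomial_pmf n M p) h = ff (real n) (a + b) * p m ^ a * p k ^ b"
    unfolding h_def using Suc.IH[of b a] Suc.prems by simp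
  finally have "measure_pmf.expectation (multinomial_pmf (Suc n) M p) h =
     ff (real n) (a + b) * p m ^ a * p k ^ b + p m * (real a * (ff (real n) (a - 1 + b) * p m ^ (a - 1) * p k ^ b))
     + p k * (real b * (ff (real n) (a + (b - 1)) * p m ^ a * p k ^ (b - 1)))" .
  also have "\<dots> = ff (real (Suc n)) (a + b) * p m ^ a * p k ^ b"
  proof -
    have e1: "p m * (real a * (ff (real n) (a - 1 + b) * p m ^ (a - 1) * p k ^ b))
        = real a * ff (real n) (a + b - 1) * p m ^ a * p k ^ b"
      by (cases a) (auto simp: algebra_simps)
    have e2: "p k * (real b * (ff (real n) (a + (b - 1)) * p m ^ a * p k ^ (b - 1)))
        = real b * ff (real n) (a + b - 1) * p m ^ a * p k ^ b"
      by (cases b) (auto simp: algebra_simps)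
    show ?thesis
      unfolding e1 e2 using ff_shift[of "real n" "a + b"] by (simp add: algebra_simps)
  qed
  finally show ?case unfolding h_def .
qed

lemma fmoment1:
  assumes nn: "\<And>m. m < M \<Longrightarrow> p m \<ge> 0" and s: "(\<Sum>m<M. p m) = 1" and mM: "m < M"
  shows "measure_pmf.expectation (multinomial_pmf n M p) (\<lambda>N. ff (real (N m)) a) = ff (real n) a * p m ^ a"
  using fmoment[OF nn s mM, of "Suc m" 0 n a] by simp

lemma ff2: "ff x 2 = x * (x - 1)" by (simp add: ff_def numeral_eq_Suc lessThan_Suc)
lemma ff3: "ff x 3 = x * (x - 1) * (x - 2)" by (simp add: ff_def numeral_eq_Suc lessThan_Suc)
lemma ff4: "ff x 4 = x * (x - 1) * (x - 2) * (x - 3)" by (simp add: ff_def numeral_eq_Suc lessThan_Suc)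
lemma ff2sq: "(ff x 2) * (ff x 2) = ff x 4 + 4 * ff x 3 + 2 * ff x 2"
  by (simp add: ff2 ff3 ff4 algebra_simps)
lemma real_nat_ff2: "real (a * (a - 1)) = ff (real a) 2"
  by (cases a) (auto simp: ff2 algebra_simps)

lemma EZZ:
  assumes nn: "\<And>m. m < M \<Longrightarrow> p m \<ge> 0" and s: "(\<Sum>m<M. p m) = 1"
    and pos: "\<And>m. m < M \<Longrightarrow> p m > 0" and n2: "n \<ge> 2"
    and mM: "m < M" and kM: "k < M"
  shows "measure_pmf.expectation (multinomial_pmf n M p)
      (\<lambda>N. (ff (real (N m)) 2 / (real n * (real n - 1) * (p m)\<^sup>2) - 1)
          * (ff (real (N k)) 2 / (real n * (real n - 1) * (p k)\<^sup>2) - 1))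
    = ((real n - 2) * (real n - 3) / (real n * (real n - 1)) - 1)
      + (if m = k then 4 * (real n - 2) / (real n * (real n - 1) * p m)
          + 2 / (real n * (real n - 1) * (p m)\<^sup>2) else 0)"
proof -
  have fin: "finite (set_pmf (multinomial_pmf n M p))" by (rule finite_multinomial[OF nn s])
  note int = integrable_measure_pmf_finite[OF fin]
  define x where "x = real n"
  have x2: "x \<ge> 2" using n2 by (simp add: x_def)
  have pm: "p m > 0" and pk: "p k > 0" using pos mM kM by auto
  define cm where "cm = x * (x - 1) * (p m)\<^sup>2"
  define ck where "ck = x * (x - 1) * (p k)\<^sup>2"
  have cm0: "cm > 0" and ck0: "ck > 0" using x2 pm pk by (auto simp: cm_def ck_def)
  have expand: "(\<lambda>N. (ff (real (N m)) 2 / (x * (x - 1) * (p m)\<^sup>2) - 1)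
          * (ff (real (N k)) 2 / (x * (x - 1) * (p k)\<^sup>2) - 1))
     = (\<lambda>N. (ff (real (N m)) 2 * ff (real (N k)) 2) / (cm * ck) - ff (real (N m)) 2 / cm
         - ff (real (N k)) 2 / ck + 1)"
    unfolding cm_def[symmetric] ck_def[symmetric] using cm0 ck0 by (intro ext) (simp add: field_simps)
  have E1m: "measure_pmf.expectation (multinomial_pmf n M p) (\<lambda>N. ff (real (N m)) 2) = x * (x - 1) * (p m)\<^sup>2"
    using fmoment1[OF nn s mM, of n 2] by (simp add: ff2 x_def power2_eq_square)
  have E1k: "measure_pmf.expectation (multinomial_pmf n M p) (\<lambda>N. ff (real (N k)) 2) = x * (x - 1) * (p k)\<^sup>2"
    using fmoment1[OF nn s kM, of n 2] by (simp add: ff2 x_def power2_eq_square)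
  show ?thesis
  proof (cases "m = k")
    case False
    have E2: "measure_pmf.expectation (multinomial_pmf n M p) (\<lambda>N. ff (real (N m)) 2 * ff (real (N k)) 2)
        = x * (x - 1) * (x - 2) * (x - 3) * (p m)\<^sup>2 * (p k)\<^sup>2"
      using fmoment[OF nn s mM _ False, of 2 n 2] kM by (simp add: ff4 x_def)
    have "measure_pmf.expectation (multinomial_pmf n M p)
      (\<lambda>N. (ff (real (N m)) 2 * ff (real (N k)) 2) / (cm * ck) - ff (real (N m)) 2 / cm
         - ff (real (N k)) 2 / ck + 1)
      = x * (x - 1) * (x - 2) * (x - 3) * (p m)\<^sup>2 * (p k)\<^sup>2 / (cm * ck)
        - x * (x - 1) * (p m)\<^sup>2 / cm - x * (x - 1) * (p k)\<^sup>2 / ck + 1"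
      by (simp add: int E2 E1m E1k)
    also have "\<dots> = (x - 2) * (x - 3) / (x * (x - 1)) - 1"
    proof -
      have nz: "x \<noteq> 0" "x - 1 \<noteq> 0" "p m \<noteq> 0" "p k \<noteq> 0" using x2 pm pk by auto
      have a1: "x * (x - 1) * (p m)\<^sup>2 / cm = 1" "x * (x - 1) * (p k)\<^sup>2 / ck = 1"
        using cm0 ck0 by (auto simp: cm_def ck_def)
      have a2: "x * (x - 1) * (x - 2) * (x - 3) * (p m)\<^sup>2 * (p k)\<^sup>2 / (cm * ck)
          = (x - 2) * (x - 3) / (x * (x - 1))"
      proof -
        have "x * (x - 1) * (x - 2) * (x - 3) * (p m)\<^sup>2 * (p k)\<^sup>2 = (cm * ck) * ((x - 2) * (x - 3) / (x * (x - 1)))"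
          unfolding cm_def ck_def using nz by (simp add: field_simps)
        then show ?thesis using cm0 ck0 by simp
      qed
      show ?thesis unfolding a1 a2 by simp
    qed
    finally show ?thesis using False expand by (simp add: x_def)
  next
    case True
    have sq: "(\<lambda>N. ff (real (N m)) 2 * ff (real (N m)) 2)
       = (\<lambda>N. ff (real (N m)) 4 + 4 * ff (real (N m)) 3 + 2 * ff (real (N m)) 2)"
      by (simp add: ff2sq)
    have E2: "measure_pmf.expectation (multinomial_pmf n M p) (\<lambda>N. ff (real (N m)) 2 * ff (real (N m)) 2)
        = x * (x - 1) * (x - 2) * (x - 3) * (p m)^4 + 4 * (x * (x - 1) * (x - 2) * (p m)^3)
          + 2 * (x * (x - 1) * (p m)^2)"
      unfolding sq using fmoment1[OF nn s mM, of n 4] fmoment1[OF nn s mM, of n 3] fmoment1[OF nn s mM, of n 2]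
      by (simp add: int ff2 ff3 ff4 x_def)
    have "measure_pmf.expectation (multinomial_pmf n M p)
      (\<lambda>N. (ff (real (N m)) 2 * ff (real (N m)) 2) / (cm * cm) - ff (real (N m)) 2 / cm
         - ff (real (N m)) 2 / cm + 1)
      = (x * (x - 1) * (x - 2) * (x - 3) * (p m)^4 + 4 * (x * (x - 1) * (x - 2) * (p m)^3)
          + 2 * (x * (x - 1) * (p m)^2)) / (cm * cm)
        - x * (x - 1) * (p m)\<^sup>2 / cm - x * (x - 1) * (p m)\<^sup>2 / cm + 1"
      by (simp add: int E2 E1m)
    also have "\<dots> = ((x - 2) * (x - 3) / (x * (x - 1)) - 1)
      + (4 * (x - 2) / (x * (x - 1) * p m) + 2 / (x * (x - 1) * (p m)\<^sup>2))"
    proof -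
      have nz: "x \<noteq> 0" "x - 1 \<noteq> 0" "p m \<noteq> 0" using x2 pm by auto
      have a1: "x * (x - 1) * (p m)\<^sup>2 / cm = 1"
        using cm0 by (auto simp: cm_def)
      have a2: "(x * (x - 1) * (x - 2) * (x - 3) * (p m)^4 + 4 * (x * (x - 1) * (x - 2) * (p m)^3)
          + 2 * (x * (x - 1) * (p m)^2)) / (cm * cm)
          = (x - 2) * (x - 3) / (x * (x - 1)) + (4 * (x - 2) / (x * (x - 1) * p m) + 2 / (x * (x - 1) * (p m)\<^sup>2))"
      proof -
        have "x * (x - 1) * (x - 2) * (x - 3) * (p m)^4 + 4 * (x * (x - 1) * (x - 2) * (p m)^3)
          + 2 * (x * (x - 1) * (p m)^2) = (cm * cm) * ((x - 2) * (x - 3) / (x * (x - 1)) + (4 * (x - 2) / (x * (x - 1) * p m) + 2 / (x * (x - 1) * (p m)\<^sup>2)))"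
        proof -
          have t1: "cm * cm * ((x - 2) * (x - 3) / (x * (x - 1))) = x * (x - 1) * (x - 2) * (x - 3) * (p m)^4"
            unfolding cm_def using nz by (simp add: field_simps power2_eq_square power4_eq_xxxx)
          have t2: "cm * cm * (4 * (x - 2) / (x * (x - 1) * p m)) = 4 * (x * (x - 1) * (x - 2) * (p m)^3)"
            unfolding cm_def using nz by (simp add: field_simps power2_eq_square power3_eq_cube)
          have t3: "cm * cm * (2 / (x * (x - 1) * (p m)\<^sup>2)) = 2 * (x * (x - 1) * (p m)^2)"
            unfolding cm_def using nz by (simp add: field_simps power2_eq_square)
          show ?thesis by (simp only: distrib_left t1 t2 t3)
        qed
        then show ?thesis using cm0 by simp
      qed
      show ?thesis unfolding a1 a2 by simp
    qed
    finally show ?thesis using True expand by (simp add: x_def ck_def cm_def)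
  qed
qed

lemma EX2:
  assumes nn: "\<And>m. m < M \<Longrightarrow> p m \<ge> 0" and s: "(\<Sum>m<M. p m) = 1"
    and pos: "\<And>m. m < M \<Longrightarrow> p m > 0" and n2: "n \<ge> 2"
  shows "measure_pmf.expectation (multinomial_pmf n M p)
      (\<lambda>N. (\<Sum>m<M. \<alpha> m * (real (N m * (N m - 1)) / (real n * (real n - 1) * (p m)\<^sup>2) - 1))\<^sup>2)
    = ((real n - 2) * (real n - 3) / (real n * (real n - 1)) - 1) * (\<Sum>m<M. \<alpha> m)\<^sup>2
      + (\<Sum>m<M. (\<alpha> m)\<^sup>2 * (4 * (real n - 2) / (real n * (real n - 1) * p m)
          + 2 / (real n * (real n - 1) * (p m)\<^sup>2)))"
proof -
  have fin: "finite (set_pmf (multinomial_pmf n M p))" by (rule finite_multinomial[OF nn s])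
  note int = integrable_measure_pmf_finite[OF fin]
  define Z where "Z = (\<lambda>(N::nat\<Rightarrow>nat) m. ff (real (N m)) 2 / (real n * (real n - 1) * (p m)\<^sup>2) - 1)"
  define \<beta> where "\<beta> = (real n - 2) * (real n - 3) / (real n * (real n - 1)) - 1"
  define \<gamma> where "\<gamma> = (\<lambda>m. 4 * (real n - 2) / (real n * (real n - 1) * p m)
          + 2 / (real n * (real n - 1) * (p m)\<^sup>2))"
  have EZ: "m < M \<Longrightarrow> k < M \<Longrightarrow> measure_pmf.expectation (multinomial_pmf n M p) (\<lambda>N. Z N m * Z N k)
     = \<beta> + (if m = k then \<gamma> m else 0)" for m k
    unfolding Z_def \<beta>_def \<gamma>_def by (rule EZZ[OF nn s pos n2])
  have sq: "(\<lambda>N. (\<Sum>m<M. \<alpha> m * (real (N m * (N m - 1)) / (real n * (real n - 1) * (p m)\<^sup>2) - 1))\<^sup>2)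
     = (\<lambda>N. \<Sum>m<M. \<Sum>k<M. \<alpha> m * \<alpha> k * (Z N m * Z N k))"
  proof (intro ext)
    fix N :: "nat \<Rightarrow> nat"
    have X: "(\<Sum>m<M. \<alpha> m * (real (N m * (N m - 1)) / (real n * (real n - 1) * (p m)\<^sup>2) - 1))
       = (\<Sum>m<M. \<alpha> m * Z N m)" unfolding Z_def real_nat_ff2 ..
    show "(\<Sum>m<M. \<alpha> m * (real (N m * (N m - 1)) / (real n * (real n - 1) * (p m)\<^sup>2) - 1))\<^sup>2
       = (\<Sum>m<M. \<Sum>k<M. \<alpha> m * \<alpha> k * (Z N m * Z N k))"
    proof -
      have "(\<Sum>m<M. \<alpha> m * Z N m)\<^sup>2 = (\<Sum>m<M. \<Sum>k<M. \<alpha> m * Z N m * (\<alpha> k * Z N k))"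
        by (simp only: power2_eq_square sum_product)
      also have "\<dots> = (\<Sum>m<M. \<Sum>k<M. \<alpha> m * \<alpha> k * (Z N m * Z N k))"
        by (simp only: mult_ac)
      finally show ?thesis using X by simp
    qed
  qed
  have "measure_pmf.expectation (multinomial_pmf n M p) (\<lambda>N. \<Sum>m<M. \<Sum>k<M. \<alpha> m * \<alpha> k * (Z N m * Z N k))
     = (\<Sum>m<M. \<Sum>k<M. \<alpha> m * \<alpha> k * measure_pmf.expectation (multinomial_pmf n M p) (\<lambda>N. Z N m * Z N k))"
    by (simp add: int Bochner_Integration.integral_sum)
  also have "\<dots> = (\<Sum>m<M. \<Sum>k<M. \<alpha> m * \<alpha> k * \<beta> + (if m = k then (\<alpha> m)\<^sup>2 * \<gamma> m else 0))"
    by (intro sum.cong refl) (auto simp: EZ algebra_simps power2_eq_square)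
  also have "\<dots> = \<beta> * (\<Sum>m<M. \<alpha> m)\<^sup>2 + (\<Sum>m<M. (\<alpha> m)\<^sup>2 * \<gamma> m)"
    by (simp add: sum.distrib power2_eq_square sum_product algebra_simps sum_distrib_left)
  finally show ?thesis unfolding sq \<beta>_def \<gamma>_def .
qed

lemma real_ineq:
  fixes x A2 S1 S2 :: real
  assumes x2: "x \<ge> 2" and A0: "A2 \<ge> 0" and AS: "A2 \<le> S1" and S2: "S2 \<ge> 0"
  shows "((x - 2) * (x - 3) / (x * (x - 1)) - 1) * A2 + (4 * (x - 2) / (x * (x - 1)) * S1
      + 2 / (x * (x - 1)) * S2) \<le> 2 * (2 / x\<^sup>2 * S2 + 4 / x * (S1 - A2))"
proof -
  have d: "x * (x - 1) > 0" using x2 by simp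
  have p1: "2 / (x * (x - 1)) * S2 \<le> 4 / x\<^sup>2 * S2"
  proof (rule mult_right_mono[OF _ S2])
    have "2 * x\<^sup>2 \<le> 4 * (x * (x - 1))" using x2 by (simp add: power2_eq_square algebra_simps)
    then show "2 / (x * (x - 1)) \<le> 4 / x\<^sup>2" using d x2 by (simp add: divide_simps)
  qed
  have num: "(6 - 4 * x) * A2 + 4 * (x - 2) * S1 \<le> 8 * (x - 1) * (S1 - A2)"
  proof -
    have "(4 * x - 2) * A2 \<le> (4 * x - 2) * S1" using AS x2 by (intro mult_left_mono) auto
    moreover have "S1 \<ge> 0" using A0 AS by simp
    ultimately show ?thesis by (simp add: algebra_simps)
  qed
  have p2: "((x - 2) * (x - 3) / (x * (x - 1)) - 1) * A2 + 4 * (x - 2) / (x * (x - 1)) * S1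
      = ((6 - 4 * x) * A2 + 4 * (x - 2) * S1) / (x * (x - 1))"
  proof -
    have gen: "\<And>y a b. y \<noteq> 0 \<Longrightarrow> (a / y - 1) * A2 + b / y * S1 = ((a - y) * A2 + b * S1) / y"
      by (simp add: field_simps)
    have "(x - 2) * (x - 3) - x * (x - 1) = 6 - 4 * x" by (simp add: algebra_simps)
    then show ?thesis using gen[of "x * (x - 1)" "(x - 2) * (x - 3)" "4 * (x - 2)"] d x2 by simp
  qed
  have p3: "4 / x * (S1 - A2) = 4 * (x - 1) * (S1 - A2) / (x * (x - 1))" using d x2 by (simp add: field_simps)
  have "((6 - 4 * x) * A2 + 4 * (x - 2) * S1) / (x * (x - 1)) \<le> 2 * (4 / x * (S1 - A2))"
    unfolding p3 using num d x2 by (simp add: divide_simps) (simp add: algebra_simps)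
  then show ?thesis using p1 p2 by (simp add: algebra_simps)
qed

lemma EX2_bound:
  assumes nn: "\<And>m. m < M \<Longrightarrow> p m \<ge> 0" and s: "(\<Sum>m<M. p m) = 1"
    and pos: "\<And>m. m < M \<Longrightarrow> p m > 0" and n2: "n \<ge> 2"
  shows "measure_pmf.expectation (multinomial_pmf n M p)
      (\<lambda>N. (\<Sum>m<M. \<alpha> m * (real (N m * (N m - 1)) / (real n * (real n - 1) * (p m)\<^sup>2) - 1))\<^sup>2)
    \<le> 2 * (2 / (real n)\<^sup>2 * (\<Sum>m<M. (\<alpha> m)\<^sup>2 / (p m)\<^sup>2)
        + 4 / real n * (\<Sum>m<M. p m * (\<alpha> m / p m - (\<Sum>m'<M. \<alpha> m'))\<^sup>2))"
proof -
  define x where "x = real n"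
  have x2: "x \<ge> 2" using n2 by (simp add: x_def)
  define A where "A = (\<Sum>m<M. \<alpha> m)"
  define S1 where "S1 = (\<Sum>m<M. (\<alpha> m)\<^sup>2 / p m)"
  define S2 where "S2 = (\<Sum>m<M. (\<alpha> m)\<^sup>2 / (p m)\<^sup>2)"
  have y: "x * (x - 1) \<noteq> 0" using x2 by simp
  have gen: "\<And>y q a. y \<noteq> 0 \<Longrightarrow> q \<noteq> 0 \<Longrightarrow> a\<^sup>2 * (4 * (x - 2) / (y * q) + 2 / (y * q\<^sup>2))
      = 4 * (x - 2) / y * (a\<^sup>2 / q) + 2 / y * (a\<^sup>2 / q\<^sup>2)"
    by (simp add: field_simps)
  have G: "(\<Sum>m<M. (\<alpha> m)\<^sup>2 * (4 * (x - 2) / (x * (x - 1) * p m) + 2 / (x * (x - 1) * (p m)\<^sup>2)))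
     = 4 * (x - 2) / (x * (x - 1)) * S1 + 2 / (x * (x - 1)) * S2"
  proof -
    have "(\<Sum>m<M. (\<alpha> m)\<^sup>2 * (4 * (x - 2) / (x * (x - 1) * p m) + 2 / (x * (x - 1) * (p m)\<^sup>2)))
      = (\<Sum>m<M. 4 * (x - 2) / (x * (x - 1)) * ((\<alpha> m)\<^sup>2 / p m) + 2 / (x * (x - 1)) * ((\<alpha> m)\<^sup>2 / (p m)\<^sup>2))"
      by (intro sum.cong refl gen y) (use pos in force)
    then show ?thesis by (simp add: S1_def S2_def sum.distrib sum_distrib_left)
  qed
  have Q: "(\<Sum>m<M. p m * (\<alpha> m / p m - A)\<^sup>2) = S1 - A\<^sup>2"
  proof -
    have "(\<Sum>m<M. p m * (\<alpha> m / p m - A)\<^sup>2) = (\<Sum>m<M. (\<alpha> m)\<^sup>2 / p m - 2 * A * \<alpha> m + A\<^sup>2 * p m)"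
    proof (intro sum.cong refl)
      fix m assume "m \<in> {..<M}"
      then have "p m \<noteq> 0" using pos by force
      then show "p m * (\<alpha> m / p m - A)\<^sup>2 = (\<alpha> m)\<^sup>2 / p m - 2 * A * \<alpha> m + A\<^sup>2 * p m"
        by (simp add: field_simps power2_eq_square)
    qed
    also have "\<dots> = S1 - 2 * A * A + A\<^sup>2 * 1"
      unfolding s[symmetric] by (simp add: S1_def A_def sum.distrib sum_subtractf sum_distrib_left)
    finally show ?thesis by (simp add: power2_eq_square)
  qed
  have Qnn: "(\<Sum>m<M. p m * (\<alpha> m / p m - A)\<^sup>2) \<ge> 0"
    by (intro sum_nonneg) (use nn in auto)
  have S2nn: "S2 \<ge> 0" unfolding S2_def by (intro sum_nonneg) auto
  have "measure_pmf.expectation (multinomial_pmf n M p)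
      (\<lambda>N. (\<Sum>m<M. \<alpha> m * (real (N m * (N m - 1)) / (real n * (real n - 1) * (p m)\<^sup>2) - 1))\<^sup>2)
     = ((x - 2) * (x - 3) / (x * (x - 1)) - 1) * A\<^sup>2
       + (4 * (x - 2) / (x * (x - 1)) * S1 + 2 / (x * (x - 1)) * S2)"
    using EX2[OF nn s pos n2, of \<alpha>] G by (simp add: x_def A_def)
  also have "\<dots> \<le> 2 * (2 / x\<^sup>2 * S2 + 4 / x * (S1 - A\<^sup>2))"
    by (rule real_ineq[OF x2]) (use Q Qnn S2nn in auto)
  finally show ?thesis by (simp add: x_def S2_def Q[unfolded A_def] A_def)
qed

lemma tail_generic:
  fixes D :: "'a pmf" and X :: "'a \<Rightarrow> real"
  assumes fin: "finite (set_pmf D)" and E: "measure_pmf.expectation D (\<lambda>x. (X x)\<^sup>2) \<le> 2 * s\<^sup>2"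
    and s0: "s \<ge> 0" and sr: "s \<le> r" and C: "C > 0"
  shows "measure_pmf.prob D {x. \<bar>X x\<bar> > C * r} \<le> 2 / C\<^sup>2"
proof (cases "r > 0")
  case True
  have int: "integrable (measure_pmf D) (\<lambda>x. (X x)\<^sup>2)" by (rule integrable_measure_pmf_finite[OF fin])
  have Cr: "(C * r)\<^sup>2 > 0" using True C by simp
  have "measure_pmf.prob D {x. \<bar>X x\<bar> > C * r} \<le> measure_pmf.prob D {x \<in> space (measure_pmf D). (X x)\<^sup>2 \<ge> (C * r)\<^sup>2}"
  proof (rule measure_pmf.finite_measure_mono)
    show "{x. C * r < \<bar>X x\<bar>} \<subseteq> {x \<in> space (measure_pmf D). (C * r)\<^sup>2 \<le> (X x)\<^sup>2}"
    proof
      fix x assume "x \<in> {x. C * r < \<bar>X x\<bar>}"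
      then have "C * r < \<bar>X x\<bar>" by simp
      moreover have "0 \<le> C * r" using True C by simp
      ultimately have "(C * r)\<^sup>2 \<le> \<bar>X x\<bar>\<^sup>2" by (intro power_mono) auto
      then show "x \<in> {x \<in> space (measure_pmf D). (C * r)\<^sup>2 \<le> (X x)\<^sup>2}" by simp
    qed
  qed simp
  also have "\<dots> \<le> measure_pmf.expectation D (\<lambda>x. (X x)\<^sup>2) / (C * r)\<^sup>2"
    by (rule integral_Markov_inequality_measure[OF int, of UNIV]) (use Cr in auto)
  also have "\<dots> \<le> 2 * s\<^sup>2 / (C * r)\<^sup>2"
    using E Cr by (simp add: divide_right_mono)
  also have "\<dots> \<le> 2 * r\<^sup>2 / (C * r)\<^sup>2"
    using Cr s0 sr by (intro divide_right_mono mult_left_mono power_mono) auto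
  also have "\<dots> = 2 / C\<^sup>2" using True C by (simp add: power_mult_distrib)
  finally show ?thesis .
next
  case False
  then have r0: "s = 0" using s0 sr by simp
  have int: "integrable (measure_pmf D) (\<lambda>x. (X x)\<^sup>2)" by (rule integrable_measure_pmf_finite[OF fin])
  have "measure_pmf.expectation D (\<lambda>x. (X x)\<^sup>2) = 0"
  proof -
    have "0 \<le> measure_pmf.expectation D (\<lambda>x. (X x)\<^sup>2)" by (intro Bochner_Integration.integral_nonneg) simp
    then show ?thesis using E r0 by (simp del: Bochner_Integration.integral_nonneg)
  qed
  then have "AE x in measure_pmf D. (X x)\<^sup>2 = 0"
    using integral_nonneg_eq_0_iff_AE[OF int] by simp
  then have "\<forall>y\<in>set_pmf D. X y = 0" by (simp add: AE_measure_pmf_iff)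
  then have "measure_pmf.prob D {x. \<bar>X x\<bar> > C * r} = 0"
  proof -
    have "r = 0" using False s0 sr by simp
    then show ?thesis using \<open>\<forall>y\<in>set_pmf D. X y = 0\<close> by (subst measure_pmf_zero_iff) auto
  qed
  then show ?thesis by simp
qed

theorem lemma8:
  fixes M :: "nat \<Rightarrow> nat" and p :: "nat \<Rightarrow> nat \<Rightarrow> real" and \<alpha> :: "nat \<Rightarrow> nat \<Rightarrow> real"
    and s :: "nat \<Rightarrow> real"
  assumes p_nonneg: "\<And>n m. m < M n \<Longrightarrow> p n m \<ge> 0"
    and p_sum: "\<And>n. (\<Sum>m<M n. p n m) = 1"
    and max_p: "(\<lambda>n. Max {p n m | m. m < M n}) \<longlonglongrightarrow> 0"
    and min_p: "liminf (\<lambda>n. ereal (real n * Min {p n m | m. m < M n})) > 0"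
    and s_def: "\<And>n. s n = sqrt (2 / (real n)\<^sup>2 * (\<Sum>m<M n. (\<alpha> n m)\<^sup>2 / (p n m)\<^sup>2)
        + 4 / real n * (\<Sum>m<M n. p n m * (\<alpha> n m / p n m - (\<Sum>m'<M n. \<alpha> n m'))\<^sup>2))"
  shows "bigO_P (\<lambda>n. multinomial_pmf n (M n) (p n))
     (\<lambda>n N. \<Sum>m<M n. \<alpha> n m * (real (N m * (N m - 1)) / (real n * (real n - 1) * (p n m)\<^sup>2) - 1))
     (\<lambda>n. s n + (\<Sum>m<M n. \<bar>\<alpha> n m\<bar>) / sqrt (real n))"
proof -
  show ?thesis unfolding bigO_P_def
  proof (intro allI impI)
    fix \<epsilon> :: real assume e: "\<epsilon> > 0"
    define C where "C = 2 / sqrt \<epsilon>"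
    have C0: "C > 0" using e by (simp add: C_def)
    have C2: "2 / C\<^sup>2 = \<epsilon> / 2" using e by (simp add: C_def power_divide)
    have ev1: "\<forall>\<^sub>F n in sequentially. 0 < ereal (real n * Min {p n m | m. m < M n})"
      using less_LiminfD[OF min_p] .
    have ev2: "\<forall>\<^sub>F n in sequentially. n \<ge> 2" by (rule eventually_ge_at_top)
    have "\<forall>\<^sub>F n in sequentially. measure_pmf.prob (multinomial_pmf n (M n) (p n))
        {x. \<bar>(\<Sum>m<M n. \<alpha> n m * (real (x m * (x m - 1)) / (real n * (real n - 1) * (p n m)\<^sup>2) - 1))\<bar>
          > C * (s n + (\<Sum>m<M n. \<bar>\<alpha> n m\<bar>) / sqrt (real n))} < \<epsilon>"
    proof (rule eventually_mono[OF eventually_conj[OF ev1 ev2]])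
      fix n assume H: "0 < ereal (real n * Min {p n m | m. m < M n}) \<and> 2 \<le> n"
      then have n2: "n \<ge> 2" and Hm: "0 < real n * Min {p n m | m. m < M n}" by auto
      have Mpos: "M n > 0"
      proof (rule ccontr)
        assume "\<not> 0 < M n" then have "M n = 0" by simp
        then show False using p_sum[of n] by simp
      qed
      have seteq: "{p n m | m. m < M n} = p n ` {..<M n}" by auto
      have finS: "finite {p n m | m. m < M n}" unfolding seteq by simp
      have Minpos: "Min {p n m | m. m < M n} > 0"
        using Hm n2 by (simp add: zero_less_mult_iff)
      have pos: "\<And>m. m < M n \<Longrightarrow> p n m > 0"
      proof -
        fix m assume "m < M n"
        then have "Min {p n m | m. m < M n} \<le> p n m" using finS by (intro Min_le) auto
        then show "p n m > 0" using Minpos by simp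
      qed
      have nn: "\<And>m. m < M n \<Longrightarrow> p n m \<ge> 0" by (rule p_nonneg)
      define T where "T = 2 / (real n)\<^sup>2 * (\<Sum>m<M n. (\<alpha> n m)\<^sup>2 / (p n m)\<^sup>2)
        + 4 / real n * (\<Sum>m<M n. p n m * (\<alpha> n m / p n m - (\<Sum>m'<M n. \<alpha> n m'))\<^sup>2)"
      have T0: "T \<ge> 0" unfolding T_def
        by (intro add_nonneg_nonneg mult_nonneg_nonneg sum_nonneg) (auto intro: nn)
      have sT0: "s n = sqrt T" unfolding T_def by (rule s_def)
      have sT: "(s n)\<^sup>2 = T" using T0 by (simp add: sT0)
      have E: "measure_pmf.expectation (multinomial_pmf n (M n) (p n))
          (\<lambda>x. (\<Sum>m<M n. \<alpha> n m * (real (x m * (x m - 1)) / (real n * (real n - 1) * (p n m)\<^sup>2) - 1))\<^sup>2)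
          \<le> 2 * (s n)\<^sup>2"
        unfolding sT T_def by (rule EX2_bound[OF nn p_sum pos n2])
      have s0: "s n \<ge> 0" using T0 by (simp add: sT0)
      have sr: "s n \<le> s n + (\<Sum>m<M n. \<bar>\<alpha> n m\<bar>) / sqrt (real n)"
        by (simp add: sum_nonneg)
      have "measure_pmf.prob (multinomial_pmf n (M n) (p n))
        {x. \<bar>(\<Sum>m<M n. \<alpha> n m * (real (x m * (x m - 1)) / (real n * (real n - 1) * (p n m)\<^sup>2) - 1))\<bar>
          > C * (s n + (\<Sum>m<M n. \<bar>\<alpha> n m\<bar>) / sqrt (real n))} \<le> 2 / C\<^sup>2"
        by (rule tail_generic[OF finite_multinomial[OF nn p_sum] E s0 sr C0])
      also have "\<dots> < \<epsilon>" using C2 e by simp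
      finally show "measure_pmf.prob (multinomial_pmf n (M n) (p n))
        {x. \<bar>(\<Sum>m<M n. \<alpha> n m * (real (x m * (x m - 1)) / (real n * (real n - 1) * (p n m)\<^sup>2) - 1))\<bar>
          > C * (s n + (\<Sum>m<M n. \<bar>\<alpha> n m\<bar>) / sqrt (real n))} < \<epsilon>" .
    qed
    then show "\<exists>C. \<forall>\<^sub>F n in sequentially. measure_pmf.prob (multinomial_pmf n (M n) (p n))
        {x. \<bar>(\<Sum>m<M n. \<alpha> n m * (real (x m * (x m - 1)) / (real n * (real n - 1) * (p n m)\<^sup>2) - 1))\<bar>
          > C * (s n + (\<Sum>m<M n. \<bar>\<alpha> n m\<bar>) / sqrt (real n))} < \<epsilon>" by blast
  qed
qed

end
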